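(* For any stable pair of cross-intersecting families $(\mathcal{A}, \mathcal{B})$ in $\mathcal{I}_{n, k}^r$, the pair $(\phi(\mathcal{A}), \phi(\mathcal{B}))$ is a cross-intersecting pair of families in $\binom{[n]}{\leq r}$.
   Context: $\Gamma_{n,k}$ is the disjoint union of $n$ copies of $K_k$, with vertices $(i,j)$, $i\in[n]$, $j\in[k]$; $\mathcal{I}_{n,k}^r$ is the set of its independent sets of size $r$. $\binom{[n]}{\le r}$ denotes the set of subsets of $[n]$ of size at most $r$. The projection $\phi:\mathcal{I}_{n,k}^r\to\binom{[n]}{\le r}$ is $\phi(X)=\{i : (i,1)\in X\}$, and $\phi(\mathcal{F})=\{\phi(X):X\in\mathcal{F}\}$. For $i\in[n]$, $s\in[2,k]$: $P_{i,s}(X)=(X\setminus\{(i,s)\})\cup\{(i,1)\}$ if $(i,s)\in X$, else $X$; $\pi_{i,s}(\mathcal{F})=\{P_{i,s}(X): X\in\mathcal{F}\}\cup\{X\in\mathcal{F}: P_{i,s}(X)\in\mathcal{F}\}$. A family is stable if $\pi_{i,s}(\mathcal{F})=\mathcal{F}$ for all $i\in[n],s\in[2,k]$; a pair is stable if both families are. A pair of non-empty families (of non-empty sets) is cross-intersecting if every member of the first meets every member of the second. *)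

theory Defs
  imports Main
begin

(* Vertices of Gamma_{n,k}: pairs (i,j) with i in [n] = {1..n}, j in [k] = {1..k}.
   Two distinct vertices are adjacent iff they lie in the same copy of K_k, i.e.
   have the same first coordinate. *)

definition vertices :: "nat \<Rightarrow> nat \<Rightarrow> (nat \<times> nat) set" where
  "vertices n k = {1..n} \<times> {1..k}"

definition independent :: "nat \<Rightarrow> nat \<Rightarrow> (nat \<times> nat) set \<Rightarrow> bool" where
  "independent n k X \<longleftrightarrow> X \<subseteq> vertices n k \<and>
     (\<forall>x\<in>X. \<forall>y\<in>X. x \<noteq> y \<longrightarrow> fst x \<noteq> fst y)"

definition indep_sets :: "nat \<Rightarrow> nat \<Rightarrow> nat \<Rightarrow> (nat \<times> nat) set set" where
  "indep_sets n k r = {X. independent n k X \<and> card X = r}"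

definition subsets_le :: "nat \<Rightarrow> nat \<Rightarrow> nat set set" where
  "subsets_le n r = {S. S \<subseteq> {1..n} \<and> card S \<le> r}"

definition proj :: "(nat \<times> nat) set \<Rightarrow> nat set" where
  "proj X = {i. (i, 1) \<in> X}"

definition shiftP :: "nat \<Rightarrow> nat \<Rightarrow> (nat \<times> nat) set \<Rightarrow> (nat \<times> nat) set" where
  "shiftP i s X = (if (i, s) \<in> X then (X - {(i, s)}) \<union> {(i, 1)} else X)"

definition shiftF :: "nat \<Rightarrow> nat \<Rightarrow> (nat \<times> nat) set set \<Rightarrow> (nat \<times> nat) set set" where
  "shiftF i s F = {shiftP i s X | X. X \<in> F} \<union> {X \<in> F. shiftP i s X \<in> F}"

definition stable :: "nat \<Rightarrow> nat \<Rightarrow> (nat \<times> nat) set set \<Rightarrow> bool" where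
  "stable n k F \<longleftrightarrow> (\<forall>i\<in>{1..n}. \<forall>s\<in>{2..k}. shiftF i s F = F)"

definition cross_intersecting :: "'a set set \<Rightarrow> 'a set set \<Rightarrow> bool" where
  "cross_intersecting A B \<longleftrightarrow> A \<noteq> {} \<and> B \<noteq> {} \<and>
     (\<forall>X\<in>A. X \<noteq> {}) \<and> (\<forall>Y\<in>B. Y \<noteq> {}) \<and>
     (\<forall>X\<in>A. \<forall>Y\<in>B. X \<inter> Y \<noteq> {})"

end

theory Submission
  imports Defs
begin

lemma closed_shift:
  assumes "stable n k F" "Y \<in> F" "i \<in> {1..n}" "s \<in> {2..k}"
  shows "shiftP i s Y \<in> F"
proof -
  have "shiftF i s F = F" using assms unfolding stable_def by blast
  then show ?thesis using assms(2) unfolding shiftF_def by blast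
qed

lemma multi_shift:
  assumes st: "stable n k F" and Y: "Y \<in> F" and fin: "finite S"
  shows "S \<subseteq> Y \<inter> ({1..n} \<times> {2..k}) \<Longrightarrow> (Y - S) \<union> (\<lambda>p. (fst p, 1)) ` S \<in> F"
  using fin
proof (induction S rule: finite_induct)
  case empty
  then show ?case using Y by simp
next
  case (insert p S)
  obtain i s where p: "p = (i, s)" by (cases p)
  have IH: "(Y - S) \<union> (\<lambda>p. (fst p, 1)) ` S \<in> F" using insert by blast
  have hs: "i \<in> {1..n}" "s \<in> {2..k}" "(i,s) \<in> Y" using insert p by auto
  have mem: "(i,s) \<in> (Y - S) \<union> (\<lambda>p. (fst p, 1)) ` S"
    using hs insert(2) p by auto
  have "shiftP i s ((Y - S) \<union> (\<lambda>p. (fst p, 1)) ` S) \<in> F"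
    using closed_shift[OF st IH hs(1,2)] .
  moreover have "shiftP i s ((Y - S) \<union> (\<lambda>p. (fst p, 1)) ` S)
      = (Y - insert p S) \<union> (\<lambda>p. (fst p, 1)) ` insert p S"
    using mem hs p unfolding shiftP_def by auto
  ultimately show ?case by simp
qed

theorem corollary4p3:
  fixes n k r :: nat and A B :: "(nat \<times> nat) set set"
  assumes "A \<subseteq> indep_sets n k r" and "B \<subseteq> indep_sets n k r"
    and "stable n k A" and "stable n k B"
    and "cross_intersecting A B"
  shows "proj ` A \<subseteq> subsets_le n r \<and> proj ` B \<subseteq> subsets_le n r \<and>
         cross_intersecting (proj ` A) (proj ` B)"
proof -
  have sub: "proj X \<in> subsets_le n r" if "X \<in> indep_sets n k r" for X
  proof -
    have X: "X \<subseteq> {1..n} \<times> {1..k}" "card X = r"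
      using that unfolding indep_sets_def independent_def vertices_def by auto
    have fX: "finite X" using X(1) finite_subset by blast
    have "(\<lambda>i. (i,1)) ` proj X \<subseteq> X" unfolding proj_def by auto
    hence "card ((\<lambda>i. (i,1::nat)) ` proj X) \<le> r" using fX X(2) card_mono by metis
    moreover have "card ((\<lambda>i. (i,1::nat)) ` proj X) = card (proj X)"
      by (rule card_image) (auto simp: inj_on_def)
    moreover have "proj X \<subseteq> {1..n}" using X(1) unfolding proj_def by auto
    ultimately show ?thesis unfolding subsets_le_def by auto
  qed
  have key: "proj X \<inter> proj Y \<noteq> {}" if XA: "X \<in> A" and YB: "Y \<in> B" for X Y
  proof
    assume disj: "proj X \<inter> proj Y = {}"
    have Xi: "independent n k X" using XA assms(1) unfolding indep_sets_def by auto
    have Yi: "independent n k Y" using YB assms(2) unfolding indep_sets_def by auto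
    define S where "S = X \<inter> Y"
    have fS: "finite S" unfolding S_def using Xi finite_subset
      unfolding independent_def vertices_def by (metis finite_Int finite_SigmaI finite_atLeastAtMost)
    have S1: "S \<subseteq> Y \<inter> ({1..n} \<times> {2..k})"
    proof
      fix p assume "p \<in> S"
      obtain i s where p: "p = (i,s)" by (cases p)
      have "(i,s) \<in> X" "(i,s) \<in> Y" using \<open>p \<in> S\<close> p S_def by auto
      moreover have "s \<noteq> 1" using disj calculation unfolding proj_def by auto
      ultimately show "p \<in> Y \<inter> ({1..n} \<times> {2..k})"
        using Yi p unfolding independent_def vertices_def by auto
    qed
    have "(Y - S) \<union> (\<lambda>p. (fst p, 1)) ` S \<in> B"
      using multi_shift[OF assms(4) YB fS S1] .
    moreover have "X \<inter> ((Y - S) \<union> (\<lambda>p. (fst p, 1)) ` S) = {}"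
    proof -
      have "(i,1) \<notin> X" if "(i,s) \<in> S" for i s
      proof
        assume "(i,1) \<in> X"
        have "s \<noteq> 1" using S1 that by auto
        moreover have "(i,s) \<in> X" using that S_def by auto
        ultimately show False using Xi \<open>(i,1) \<in> X\<close> unfolding independent_def by force
      qed
      then show ?thesis unfolding S_def by force
    qed
    ultimately show False using assms(5) XA unfolding cross_intersecting_def by blast
  qed
  have ne: "A \<noteq> {}" "B \<noteq> {}" using assms(5) unfolding cross_intersecting_def by auto
  show ?thesis
  proof (intro conjI)
    show "proj ` A \<subseteq> subsets_le n r" using sub assms(1) by blast
    show "proj ` B \<subseteq> subsets_le n r" using sub assms(2) by blast
    show "cross_intersecting (proj ` A) (proj ` B)"
      unfolding cross_intersecting_def
    proof (intro conjI ballI)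
      show "proj ` A \<noteq> {}" "proj ` B \<noteq> {}" using ne by auto
      fix X assume "X \<in> proj ` A"
      then obtain X0 where "X0 \<in> A" "X = proj X0" by blast
      moreover obtain Y0 where "Y0 \<in> B" using ne by blast
      ultimately show "X \<noteq> {}" using key by blast
    next
      fix Y assume "Y \<in> proj ` B"
      then obtain Y0 where "Y0 \<in> B" "Y = proj Y0" by blast
      moreover obtain X0 where "X0 \<in> A" using ne by blast
      ultimately show "Y \<noteq> {}" using key by blast
    next
      fix X Y assume "X \<in> proj ` A" "Y \<in> proj ` B"
      then show "X \<inter> Y \<noteq> {}" using key by blast
    qed
  qed
qed

end
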